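(* Let $t(z),d(z)\in\mathbb{C}[[z]]$ be such that $t^2-4d$ has a simple zero at $z=0$. Let $A(z,\lambda)\in\mathfrak{gl}_2(\mathbb{C}[[z,\lambda]])$ with $\operatorname{tr}A(z,0)=t(z)$, $\det A(z,0)=d(z)$, and let $R(z,\lambda)\in\mathrm{GL}_2(\mathbb{C}((z))[[\lambda]])$ with $R(z,0)\in\mathrm{GL}_2(\mathbb{C}[[z]])$. Set $\mathrm{Gauge}_\lambda(A,R)=R^{-1}AR+\lambda R^{-1}\frac{dR}{dz}\in\mathfrak{gl}_2(\mathbb{C}((z))[[\lambda]])$. If $\mathrm{Gauge}_\lambda(A,R)\in\mathfrak{gl}_2(\mathbb{C}[[z,\lambda]])$, then $R(z,\lambda)\in\mathrm{GL}_2(\mathbb{C}[[z,\lambda]])$. *)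

theory Defs
  imports "HOL-Analysis.Analysis" "HOL-Computational_Algebra.Formal_Laurent_Series"
begin

text \<open>A bivariate series in C[[z,lambda]] is represented as a power series in
  lambda whose coefficients are power series in z: type complex fps fps.
  C((z))[[lambda]] is represented as complex fls fps (power series in lambda with
  Laurent-series coefficients in z). 2x2 matrices are complex-valued entries of type _^2^2.\<close>

definition mat_map :: "('a \<Rightarrow> 'b) \<Rightarrow> 'a^'n^'m \<Rightarrow> 'b^'n^'m" where
  "mat_map f M = (\<chi> i j. f (M $ i $ j))"

definition incl :: "complex fps fps \<Rightarrow> complex fls fps" where
  "incl F = Abs_fps (\<lambda>n. fps_to_fls (F $ n))"

definition ddz :: "complex fls fps \<Rightarrow> complex fls fps" where
  "ddz F = Abs_fps (\<lambda>n. fls_deriv (F $ n))"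

definition at_lambda0 :: "'a::zero fps \<Rightarrow> 'a" where
  "at_lambda0 F = F $ 0"

definition gauge :: "complex fps fps^2^2 \<Rightarrow> complex fls fps^2^2 \<Rightarrow> complex fls fps^2^2" where
  "gauge A R = matrix_inv R ** mat_map incl A ** R
      + mat_map (\<lambda>x. fps_X * x) (matrix_inv R ** mat_map ddz R)"

end

theory Submission
  imports Defs
begin

unbundle fps_syntax



definition hol :: "complex fls \<Rightarrow> bool" where
  "hol f \<longleftrightarrow> (\<forall>n<0. f $$ n = 0)"

lemma hol_subdeg: "hol f \<longleftrightarrow> 0 \<le> fls_subdegree f"
  unfolding hol_def
proof
  assume "\<forall>n<0. f $$ n = 0"
  then show "0 \<le> fls_subdegree f" by (intro fls_subdegree_ge0I) auto
next
  assume "0 \<le> fls_subdegree f"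
  then show "\<forall>n<0. f $$ n = 0" by (auto intro: nth_less_subdegree_zero)
qed

lemma hol_add[intro]: "hol f \<Longrightarrow> hol g \<Longrightarrow> hol (f + g)" by (simp add: hol_def)
lemma hol_diff[intro]: "hol f \<Longrightarrow> hol g \<Longrightarrow> hol (f - g)" by (simp add: hol_def)
lemma hol_uminus[intro]: "hol f \<Longrightarrow> hol (- f)" by (simp add: hol_def)
lemma hol_0[intro,simp]: "hol 0" by (simp add: hol_def)
lemma hol_1[intro,simp]: "hol 1" by (simp add: hol_def)
lemma hol_mult[intro]: "hol f \<Longrightarrow> hol g \<Longrightarrow> hol (f * g)"
  by (simp add: hol_subdeg fls_mult_subdegree_ge_0)
lemma hol_fps[intro,simp]: "hol (fps_to_fls f)" by (simp add: hol_def)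
lemma hol_deriv[intro]: "hol f \<Longrightarrow> hol (fls_deriv f)"
  unfolding hol_def
proof (intro allI impI)
  fix n :: int assume h: "\<forall>n<0. f $$ n = 0" and "n < 0"
  then show "fls_deriv f $$ n = 0"
    by (cases "n + 1 = 0") auto
qed
lemma hol_sum[intro]: "(\<And>i. i \<in> S \<Longrightarrow> hol (f i)) \<Longrightarrow> hol (sum f S)"
  by (induction S rule: infinite_finite_induct) auto
lemma hol_regpart: "hol f \<Longrightarrow> fps_to_fls (fls_regpart f) = f"
  by (simp add: hol_subdeg)

lemma hol_deriv_rev:
  assumes "hol (fls_deriv f)" shows "hol f"
  unfolding hol_def
proof (intro allI impI)
  fix n :: int assume "n < 0"
  from assms have "\<forall>k<0. fls_deriv f $$ k = 0" by (simp only: hol_def)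
  then have "fls_deriv f $$ (n - 1) = 0" using \<open>n < 0\<close> by (simp del: fls_deriv_nth)
  then have "of_int n * f $$ n = 0" by simp
  moreover have "(of_int n :: complex) \<noteq> 0" using \<open>n < 0\<close> by simp
  ultimately show "f $$ n = 0" by simp
qed

lemma low_coeff:
  fixes f g :: "complex fls"
  assumes "\<And>i. i < p \<Longrightarrow> f $$ i = 0" "\<And>j. j < q \<Longrightarrow> g $$ j = 0"
  shows "(f * g) $$ (p + q) = f $$ p * g $$ q"
proof (cases "f = 0 \<or> g = 0")
  case True then show ?thesis by auto
next
  case False
  then have nz: "f \<noteq> 0" "g \<noteq> 0" by auto
  have sf: "p \<le> fls_subdegree f" using assms(1) nz(1)
    by (metis fls_subdegree_geI linorder_not_le nth_fls_subdegree_nonzero order.strict_iff_not)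
  have sg: "q \<le> fls_subdegree g" using assms(2) nz(2)
    by (metis linorder_not_le nth_fls_subdegree_nonzero)
  show ?thesis
  proof (cases "p = fls_subdegree f \<and> q = fls_subdegree g")
    case True
    then show ?thesis by (simp add: fls_times_nth(4))
  next
    case False
    then have "p + q < fls_subdegree f + fls_subdegree g" using sf sg by auto
    then have "(f * g) $$ (p + q) = 0" by (rule fls_times_nth_eq0)
    moreover have "f $$ p = 0 \<or> g $$ q = 0"
    proof (cases "p < fls_subdegree f")
      case True then show ?thesis by (simp add: nth_less_subdegree_zero)
    next
      case False
      then have "q < fls_subdegree g" using \<open>\<not> (p = fls_subdegree f \<and> q = fls_subdegree g)\<close> sf sg by auto
      then show ?thesis by (simp add: nth_less_subdegree_zero)
    qed
    then have "f $$ p * g $$ q = 0" by auto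
    ultimately show ?thesis by simp
  qed
qed

lemma val_lemma:
  fixes e :: "complex fps" and s :: "complex fls"
  assumes se: "subdegree e = 1"
    and h: "hol (fps_to_fls e * fls_deriv s + fps_to_fls e * fls_deriv s + fls_deriv (fps_to_fls e) * s)"
  shows "hol s"
proof (rule ccontr)
  assume ns: "\<not> hol s"
  define E where "E = fps_to_fls e"
  define m where "m = fls_subdegree s"
  have snz: "s \<noteq> 0" using ns by (auto simp: hol_def)
  have m0: "m < 0" using ns by (simp add: hol_subdeg m_def)
  have sm: "s $$ m \<noteq> 0" using snz by (simp add: m_def)
  have slow: "\<And>j. j < m \<Longrightarrow> s $$ j = 0" by (simp add: m_def nth_less_subdegree_zero)
  have enz: "e \<noteq> 0" using se by auto
  have e0: "e $ 0 = 0" using nth_less_subdegree_zero[of 0 e] se by simp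
  have e1: "e $ 1 \<noteq> 0" using nth_subdegree_nonzero[of e] se enz by simp
  have Elow: "\<And>i. i < 1 \<Longrightarrow> E $$ i = 0"
  proof -
    fix i :: int assume "i < 1"
    then have "i < 0 \<or> i = 0" by linarith
    then show "E $$ i = 0" unfolding E_def
      by (elim disjE) (simp_all add: e0)
  qed
  have dslow: "\<And>j. j < m - 1 \<Longrightarrow> fls_deriv s $$ j = 0"
  proof -
    fix j :: int assume "j < m - 1"
    then have "s $$ (j + 1) = 0" using slow by simp
    then show "fls_deriv s $$ j = 0" by (simp only: fls_deriv_nth mult_zero_right)
  qed
  have dElow: "\<And>j. j < 0 \<Longrightarrow> fls_deriv E $$ j = 0"
  proof -
    fix j :: int assume "j < 0"
    then have "E $$ (j + 1) = 0" using Elow by simp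
    then show "fls_deriv E $$ j = 0" by (simp only: fls_deriv_nth mult_zero_right)
  qed
  have c1: "(E * fls_deriv s) $$ m = E $$ 1 * fls_deriv s $$ (m - 1)"
    using low_coeff[of 1 E "m - 1" "fls_deriv s", OF Elow dslow] by (simp del: fls_deriv_nth)
  have c2: "(fls_deriv E * s) $$ m = fls_deriv E $$ 0 * s $$ m"
    using low_coeff[of 0 "fls_deriv E" m s, OF dElow slow] by (simp del: fls_deriv_nth)
  have E1: "E $$ 1 = e $ 1" by (simp add: E_def)
  have "(E * fls_deriv s + E * fls_deriv s + fls_deriv E * s) $$ m = 0"
    using h m0 by (simp only: hol_def E_def)
  then have "(E * fls_deriv s) $$ m + (E * fls_deriv s) $$ m + (fls_deriv E * s) $$ m = 0"
    by (simp only: fls_plus_nth)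
  then have "e $ 1 * s $$ m * (2 * of_int m + 1) = 0"
    unfolding c1 c2 by (simp add: E1 algebra_simps)
  moreover have "(2 * of_int m + 1 :: complex) \<noteq> 0"
  proof
    assume "(2 * of_int m + 1 :: complex) = 0"
    then have "(of_int (2 * m + 1) :: complex) = of_int 0" by simp
    then have "2 * m + 1 = 0" by (simp only: of_int_eq_iff)
    then show False by presburger
  qed
  ultimately have "e $ 1 * s $$ m = 0" by (simp only: mult_eq_0_iff) blast
  then show False using e1 sm by simp
qed




lemma hol_double: "hol (f + f) \<Longrightarrow> hol f"
  unfolding hol_def by (auto simp: fls_plus_nth)

lemma hol_unit:
  assumes "hol b" "b $$ 0 \<noteq> 0"
  shows "\<exists>bi. hol bi \<and> bi * b = 1"
proof -
  define b0 where "b0 = fls_regpart b"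
  have bb: "fps_to_fls b0 = b" using assms(1) by (simp add: b0_def hol_regpart)
  have "b0 $ 0 \<noteq> 0" using assms(2) by (simp add: b0_def)
  then have "inverse b0 * b0 = 1" by (rule inverse_mult_eq_1)
  then have "fps_to_fls (inverse b0 * b0) = 1" by simp
  then have "fps_to_fls (inverse b0) * b = 1"
    by (simp only: fls_times_fps_to_fls bb)
  then show ?thesis by blast
qed

lemma hol_cancel:
  assumes "hol (b * k)" "hol bi" "bi * b = 1"
  shows "hol k"
proof -
  have eq: "bi * (b * k) = k" using assms(3) by (simp add: mult.assoc[symmetric])
  have "hol (bi * (b * k))" using assms(1,2) by (rule hol_mult[rotated])
  then show ?thesis by (simp only: eq)
qed

lemma low0: "hol f \<Longrightarrow> (\<And>i. i < 0 \<Longrightarrow> f $$ i = 0)" by (simp add: hol_def)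

lemma nonzero_bc:
  fixes a b c :: "complex fls" and e :: "complex fps"
  assumes ha: "hol a" and hb: "hol b" and hc: "hol c"
    and de: "a * a + b * c = fps_to_fls e" and se: "subdegree e = 1"
  shows "b $$ 0 \<noteq> 0 \<or> c $$ 0 \<noteq> 0"
proof (rule ccontr)
  assume "\<not> (b $$ 0 \<noteq> 0 \<or> c $$ 0 \<noteq> 0)"
  then have b0: "b $$ 0 = 0" and c0: "c $$ 0 = 0" by auto
  have enz: "e \<noteq> 0" using se by auto
  have e0: "e $ 0 = 0" using nth_less_subdegree_zero[of 0 e] se by simp
  have e1: "e $ 1 \<noteq> 0" using nth_subdegree_nonzero[of e] se enz by simp
  have aa0: "(a * a) $$ 0 = a $$ 0 * a $$ 0"
    using low_coeff[of 0 a 0 a, OF low0[OF ha] low0[OF ha]] by simp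
  have bc0: "(b * c) $$ 0 = b $$ 0 * c $$ 0"
    using low_coeff[of 0 b 0 c, OF low0[OF hb] low0[OF hc]] by simp
  have "(a * a + b * c) $$ 0 = 0" using de e0 by simp
  then have "a $$ 0 * a $$ 0 = 0" using aa0 bc0 b0 by simp
  then have a0: "a $$ 0 = 0" by simp
  have alow: "\<And>i. i < 1 \<Longrightarrow> a $$ i = 0"
  proof -
    fix i :: int assume "i < 1"
    then have "i < 0 \<or> i = 0" by linarith
    then show "a $$ i = 0" using low0[OF ha] a0 by auto
  qed
  have blow: "\<And>i. i < 1 \<Longrightarrow> b $$ i = 0"
  proof -
    fix i :: int assume "i < 1"
    then have "i < 0 \<or> i = 0" by linarith
    then show "b $$ i = 0" using low0[OF hb] b0 by auto
  qed
  have aa1: "(a * a) $$ 1 = a $$ 1 * a $$ 0"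
    using low_coeff[of 1 a 0 a, OF alow low0[OF ha]] by simp
  have bc1: "(b * c) $$ 1 = b $$ 1 * c $$ 0"
    using low_coeff[of 1 b 0 c, OF blow low0[OF hc]] by simp
  have "(a * a + b * c) $$ 1 = e $ 1" using de by simp
  then have "e $ 1 = 0" using aa1 bc1 a0 c0 by simp
  then show False using e1 by simp
qed

lemma decomp:
  fixes a b c k11 k12 k21 k22 :: "complex fls" and e :: "complex fps"
  assumes ha: "hol a" and hb: "hol b" and hc: "hol c"
    and de: "a * a + b * c = fps_to_fls e" and se: "subdegree e = 1"
    and P1: "hol (b * k21 - c * k12)"
    and P2: "hol (a * k12 + a * k12 + b * k22 - b * k11)"
    and P3: "hol (c * k11 - c * k22 - a * k21 - a * k21)"
  shows "\<exists>x s h11 h12 h21 h22. hol h11 \<and> hol h12 \<and> hol h21 \<and> hol h22 \<and>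
     k11 = x + s * a + h11 \<and> k12 = s * b + h12 \<and> k21 = s * c + h21 \<and> k22 = x - s * a + h22"
proof -
  have "b $$ 0 \<noteq> 0 \<or> c $$ 0 \<noteq> 0" by (rule nonzero_bc[OF ha hb hc de se])
  then show ?thesis
  proof
    assume "b $$ 0 \<noteq> 0"
    then obtain bi where hbi: "hol bi" and bi: "bi * b = 1" using hol_unit[OF hb] by blast
    define s where "s = k12 * bi"
    define x where "x = k11 - s * a"
    have sb: "s * b = k12" using bi by (simp add: s_def mult.assoc)
    have h21: "hol (k21 - s * c)"
    proof (rule hol_cancel[OF _ hbi bi])
      have "b * (k21 - s * c) = b * k21 - c * (s * b)" by (simp add: algebra_simps)
      also have "\<dots> = b * k21 - c * k12" by (simp add: sb)
      finally show "hol (b * (k21 - s * c))" using P1 by simp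
    qed
    have h22: "hol (k22 - x + s * a)"
    proof (rule hol_cancel[OF _ hbi bi])
      have "b * (k22 - x + s * a) = a * (s * b) + a * (s * b) + b * k22 - b * k11"
        by (simp add: x_def algebra_simps)
      also have "\<dots> = a * k12 + a * k12 + b * k22 - b * k11" by (simp add: sb)
      finally show "hol (b * (k22 - x + s * a))" using P2 by simp
    qed
    show ?thesis
      apply (rule exI[of _ x], rule exI[of _ s], rule exI[of _ 0], rule exI[of _ 0],
             rule exI[of _ "k21 - s * c"], rule exI[of _ "k22 - x + s * a"])
      using h21 h22 sb by (simp add: x_def)
  next
    assume "c $$ 0 \<noteq> 0"
    then obtain ci where hci: "hol ci" and ci: "ci * c = 1" using hol_unit[OF hc] by blast
    define s where "s = k21 * ci"
    define x where "x = k11 - s * a"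
    have sc: "s * c = k21" using ci by (simp add: s_def mult.assoc)
    have h12: "hol (k12 - s * b)"
    proof (rule hol_cancel[OF _ hci ci])
      have "c * (k12 - s * b) = - (b * (s * c) - c * k12)" by (simp add: algebra_simps)
      also have "\<dots> = - (b * k21 - c * k12)" by (simp add: sc)
      finally show "hol (c * (k12 - s * b))" using hol_uminus[OF P1] by simp
    qed
    have h22: "hol (k22 - x + s * a)"
    proof (rule hol_cancel[OF _ hci ci])
      have "c * (k22 - x + s * a) = - (c * k11 - c * k22 - a * (s * c) - a * (s * c))"
        by (simp add: x_def algebra_simps)
      also have "\<dots> = - (c * k11 - c * k22 - a * k21 - a * k21)" by (simp add: sc)
      finally show "hol (c * (k22 - x + s * a))" using hol_uminus[OF P3] by simp
    qed
    show ?thesis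
      apply (rule exI[of _ x], rule exI[of _ s], rule exI[of _ 0], rule exI[of _ "k12 - s * b"],
             rule exI[of _ 0], rule exI[of _ "k22 - x + s * a"])
      using h12 h22 sc by (simp add: x_def)
  qed
qed

lemma key:
  fixes a b c k11 k12 k21 k22 :: "complex fls" and e :: "complex fps"
  assumes ha: "hol a" and hb: "hol b" and hc: "hol c"
    and de: "a * a + b * c = fps_to_fls e" and se: "subdegree e = 1"
    and P1: "hol (b * k21 - c * k12)"
    and P2: "hol (a * k12 + a * k12 + b * k22 - b * k11)"
    and P3: "hol (c * k11 - c * k22 - a * k21 - a * k21)"
    and T1: "hol (fls_deriv k11 + fls_deriv k22)"
    and T2: "hol (a * fls_deriv k11 + b * fls_deriv k21 + c * fls_deriv k12 - a * fls_deriv k22)"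
  shows "hol k11 \<and> hol k12 \<and> hol k21 \<and> hol k22"
proof -
  obtain x s h11 h12 h21 h22 where hh: "hol h11" "hol h12" "hol h21" "hol h22"
    and k: "k11 = x + s * a + h11" "k12 = s * b + h12" "k21 = s * c + h21" "k22 = x - s * a + h22"
    using decomp[OF ha hb hc de se P1 P2 P3] by blast
  have "fls_deriv x + fls_deriv x = (fls_deriv k11 + fls_deriv k22) - (fls_deriv h11 + fls_deriv h22)"
    unfolding k by (simp add: algebra_simps)
  moreover have "hol ((fls_deriv k11 + fls_deriv k22) - (fls_deriv h11 + fls_deriv h22))"
    by (rule hol_diff[OF T1]) (intro hol_add hol_deriv hh)
  ultimately have "hol (fls_deriv x + fls_deriv x)" by simp
  then have hx: "hol x" by (rule hol_deriv_rev[OF hol_double])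
  define E where "E = a * a + b * c"
  have "E * fls_deriv s + E * fls_deriv s + fls_deriv E * s =
      (a * fls_deriv k11 + b * fls_deriv k21 + c * fls_deriv k12 - a * fls_deriv k22)
        - (a * fls_deriv h11 + b * fls_deriv h21 + c * fls_deriv h12 - a * fls_deriv h22)"
    unfolding k E_def by (simp add: algebra_simps)
  moreover have "hol ((a * fls_deriv k11 + b * fls_deriv k21 + c * fls_deriv k12 - a * fls_deriv k22)
        - (a * fls_deriv h11 + b * fls_deriv h21 + c * fls_deriv h12 - a * fls_deriv h22))"
    by (rule hol_diff[OF T2]) (intro hol_diff hol_add hol_deriv hol_mult hh ha hb hc)
  ultimately have "hol (E * fls_deriv s + E * fls_deriv s + fls_deriv E * s)" by simp
  then have "hol (fps_to_fls e * fls_deriv s + fps_to_fls e * fls_deriv s + fls_deriv (fps_to_fls e) * s)"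
    by (simp only: E_def de)
  then have hs: "hol s" by (rule val_lemma[OF se])
  show ?thesis unfolding k using hx hs hh ha hb hc by (intro conjI hol_add hol_diff hol_mult)
qed




definition Hm :: "complex fls^2^2 \<Rightarrow> bool" where
  "Hm X \<longleftrightarrow> (\<forall>i j. hol (X $ i $ j))"

definition dm :: "complex fls^2^2 \<Rightarrow> complex fls^2^2" where
  "dm X = mat_map fls_deriv X"

lemma Hm_iff: "Hm X \<longleftrightarrow> hol (X$1$1) \<and> hol (X$1$2) \<and> hol (X$2$1) \<and> hol (X$2$2)"
  unfolding Hm_def by (simp add: forall_2)

lemma Hm_mult: "Hm P \<Longrightarrow> Hm Q \<Longrightarrow> Hm (P ** Q)"
  unfolding Hm_def by (simp add: matrix_matrix_mult_def sum_2 hol_add hol_mult)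
lemma Hm_add: "Hm P \<Longrightarrow> Hm Q \<Longrightarrow> Hm (P + Q)"
  unfolding Hm_def by (simp add: hol_add)
lemma Hm_diff: "Hm P \<Longrightarrow> Hm Q \<Longrightarrow> Hm (P - Q)"
  unfolding Hm_def by (simp add: hol_diff)
lemma Hm_dm: "Hm P \<Longrightarrow> Hm (dm P)"
  unfolding Hm_def dm_def mat_map_def by (simp add: hol_deriv)
lemma Hm_mat1: "Hm (mat 1)"
  unfolding Hm_def mat_def by simp
lemma Hm_sum: "(\<And>i. i \<in> S \<Longrightarrow> Hm (f i)) \<Longrightarrow> Hm (sum f S)"
  unfolding Hm_def by (simp add: hol_sum)
lemma hol_trace: "Hm P \<Longrightarrow> hol (trace P)"
  unfolding Hm_def trace_def by (simp add: sum_2 hol_add)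

lemma dm_mat1: "dm (mat 1) = 0"
  unfolding dm_def mat_map_def mat_def by (simp add: vec_eq_iff)

lemma id_tr1:
  fixes Y B K X1 A1 C W :: "'a::comm_ring_1^2^2"
  shows "trace (Y**B - B**Y + K**(B**X1 - X1**B + A1 + C) - A1**K - C**K + W)
       = trace (K ** (B ** X1)) - trace (K ** (X1 ** B)) + trace W"
  by (simp add: trace_def sum_2 matrix_matrix_mult_def algebra_simps)

lemma id_tr2:
  fixes Y B K X1 A1 C W :: "'a::comm_ring_1^2^2"
  shows "trace (B ** (Y**B - B**Y + K**(B**X1 - X1**B + A1 + C) - A1**K - C**K + W))
       = trace (B ** K ** (B ** X1 - X1 ** B)) + trace ((B ** K - K ** B) ** (A1 + C)) + trace (B ** W)"
  by (simp add: trace_def sum_2 matrix_matrix_mult_def algebra_simps)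

lemma id_tr3:
  fixes B K X :: "'a::comm_ring_1^2^2"
  shows "trace (K ** (B ** X)) - trace (K ** (X ** B)) = trace ((K ** B - B ** K) ** X)"
  by (simp add: trace_def sum_2 matrix_matrix_mult_def algebra_simps)

lemma id_tr4:
  fixes B K :: "'a::comm_ring_1^2^2"
  shows "trace (K ** (B ** K)) - trace (K ** (K ** B)) = 0"
  by (simp add: trace_def sum_2 matrix_matrix_mult_def algebra_simps)

lemma id_tr5:
  fixes B K X :: "'a::comm_ring_1^2^2"
  shows "trace (B ** K ** (B ** X - X ** B)) = trace (B ** (K ** B - B ** K) ** X)"
  by (simp add: trace_def sum_2 matrix_matrix_mult_def algebra_simps)

lemma id_tr6:
  fixes B K :: "'a::comm_ring_1^2^2"
  shows "trace (B ** K ** (B ** K - K ** B)) + trace (B ** K ** (B ** K - K ** B))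
     = trace ((K ** B - B ** K) ** (K ** B - B ** K))"
  by (simp add: trace_def sum_2 matrix_matrix_mult_def algebra_simps)




lemma core:
  fixes X G Ah :: "nat \<Rightarrow> complex fls^2^2" and C B :: "complex fls^2^2"
    and a b c \<tau> :: "complex fls" and e :: "complex fps"
  assumes X0: "X 0 = mat 1"
    and HG: "\<And>n. Hm (G n)" and HA: "\<And>n. Hm (Ah n)" and HC: "Hm C"
    and G0: "G 0 = B" and A0: "Ah 0 = B"
    and B11: "B$1$1 = \<tau> + a" and B12: "B$1$2 = b" and B21: "B$2$1 = c" and B22: "B$2$2 = \<tau> - a"
    and ha: "hol a" and hb: "hol b" and hc: "hol c" and ht: "hol \<tau>"
    and de: "a * a + b * c = fps_to_fls e" and se: "subdegree e = 1"
    and F: "\<And>n. (\<Sum>i\<le>n. X i ** G (n - i)) = (\<Sum>i\<le>n. Ah i ** X (n - i))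
               + (if n = 0 then 0 else C ** X (n - 1) + dm (X (n - 1)))"
  shows "Hm (X n)"
proof -
  have HB: "Hm B" using HG[of 0] G0 by simp
  have F1: "G 1 = B ** X 1 - X 1 ** B + Ah 1 + C"
  proof -
    have "(\<Sum>i\<le>1. X i ** G (1 - i)) = (\<Sum>i\<le>1. Ah i ** X (1 - i)) + (C ** X 0 + dm (X 0))"
      using F[of 1] by simp
    then have "G 1 + X 1 ** B = B ** X 1 + Ah 1 + C"
      by (simp add: X0 G0 A0 dm_mat1 matrix_mul_lid matrix_mul_rid algebra_simps)
    then show ?thesis by (simp add: algebra_simps)
  qed
  have "\<forall>j\<le>n. Hm (X j)"
  proof (induction n)
    case 0
    then show ?case using X0 Hm_mat1 by simp
  next
    case (Suc n)
    have IH: "\<And>j. j \<le> n \<Longrightarrow> Hm (X j)" using Suc.IH by simp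
    define K where "K = X (Suc n)"
    define Y where "Y = X (Suc (Suc n))"
    define S1 where "S1 = (\<Sum>i\<le>n. X i ** G (Suc n - i))"
    define S2 where "S2 = (\<Sum>i\<le>n. Ah (Suc i) ** X (n - i))"
    define S3 where "S3 = (\<Sum>i\<le>n. X i ** G (Suc (Suc n) - i))"
    define S4 where "S4 = (\<Sum>i\<le>n. Ah (Suc (Suc i)) ** X (n - i))"
    have HS1: "Hm S1" unfolding S1_def by (intro Hm_sum Hm_mult IH HG) simp
    have HS2: "Hm S2" unfolding S2_def by (intro Hm_sum Hm_mult IH HA) simp
    have HS3: "Hm S3" unfolding S3_def by (intro Hm_sum Hm_mult IH HG) simp
    have HS4: "Hm S4" unfolding S4_def by (intro Hm_sum Hm_mult IH HA) simp
    have L1: "(\<Sum>i\<le>Suc n. X i ** G (Suc n - i)) = S1 + K ** B"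
      unfolding S1_def K_def by (simp only: sum.atMost_Suc) (simp add: G0)
    have R1: "(\<Sum>i\<le>Suc n. Ah i ** X (Suc n - i)) = B ** K + S2"
      unfolding S2_def K_def by (simp only: sum.atMost_Suc_shift) (simp add: A0)
    have E1: "S1 + K ** B = B ** K + S2 + (C ** X n + dm (X n))"
      using F[of "Suc n"] unfolding L1 R1 by simp
    have L2: "(\<Sum>i\<le>Suc (Suc n). X i ** G (Suc (Suc n) - i)) = S3 + K ** G 1 + Y ** B"
      unfolding S3_def K_def Y_def by (simp only: sum.atMost_Suc) (simp add: G0)
    have R2: "(\<Sum>i\<le>Suc (Suc n). Ah i ** X (Suc (Suc n) - i)) = B ** Y + (Ah 1 ** K + S4)"
      unfolding S4_def K_def Y_def by (simp only: sum.atMost_Suc_shift) (simp add: A0)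
    have E2: "S3 + K ** G 1 + Y ** B = B ** Y + (Ah 1 ** K + S4) + (C ** K + dm K)"
      using F[of "Suc (Suc n)"] unfolding L2 R2 by (simp add: K_def)
    have HW1: "Hm (K ** B - B ** K)"
    proof -
      have "K ** B - B ** K = S2 + (C ** X n + dm (X n)) - S1" using E1 by (simp add: algebra_simps)
      moreover have "Hm (S2 + (C ** X n + dm (X n)) - S1)"
        using HS1 HS2 HC IH[of n] by (intro Hm_diff Hm_add Hm_mult Hm_dm) auto
      ultimately show ?thesis by simp
    qed
    define W where "W = S3 - S4"
    have HW: "Hm W" unfolding W_def using HS3 HS4 by (rule Hm_diff)
    have dK: "dm K = Y**B - B**Y + K**(B ** X 1 - X 1 ** B + Ah 1 + C) - Ah 1**K - C**K + W"
      using E2 unfolding F1[symmetric] W_def by (simp add: algebra_simps)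
    have T1: "hol (trace (dm K))"
    proof -
      have "trace (dm K) = trace (K ** (B ** X 1)) - trace (K ** (X 1 ** B)) + trace W"
        unfolding dK by (rule id_tr1)
      moreover have "hol (trace (K ** (B ** X 1)) - trace (K ** (X 1 ** B)))"
      proof (cases "n = 0")
        case True
        then have "X 1 = K" by (simp add: K_def)
        then show ?thesis using id_tr4[of K B] by simp
      next
        case False
        then have "Hm (X 1)" using IH[of 1] by simp
        then show ?thesis unfolding id_tr3 using HW1 by (intro hol_trace Hm_mult)
      qed
      ultimately show ?thesis using HW hol_trace by (simp add: hol_add)
    qed
    have T2: "hol (trace (B ** dm K))"
    proof -
      have "trace (B ** dm K) = trace (B ** K ** (B ** X 1 - X 1 ** B)) + trace ((B ** K - K ** B) ** (Ah 1 + C)) + trace (B ** W)"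
        unfolding dK by (rule id_tr2)
      moreover have "hol (trace (B ** K ** (B ** X 1 - X 1 ** B)))"
      proof (cases "n = 0")
        case True
        then have X1: "X 1 = K" by (simp add: K_def)
        have "hol (trace ((K ** B - B ** K) ** (K ** B - B ** K)))"
          using HW1 by (intro hol_trace Hm_mult)
        then have "hol (trace (B ** K ** (B ** K - K ** B)) + trace (B ** K ** (B ** K - K ** B)))"
          by (simp only: id_tr6)
        then show ?thesis unfolding X1 by (rule hol_double)
      next
        case False
        then have "Hm (X 1)" using IH[of 1] by simp
        then show ?thesis unfolding id_tr5 using HW1 HB by (intro hol_trace Hm_mult)
      qed
      moreover have "hol (trace ((B ** K - K ** B) ** (Ah 1 + C)))"
      proof -
        have "Hm (B ** K - K ** B)" using Hm_diff[OF Hm_mat1 Hm_mat1] HW1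
          by (metis Hm_iff Hm_def hol_uminus minus_diff_eq vector_uminus_component)
        then show ?thesis using HA[of 1] HC by (intro hol_trace Hm_mult Hm_add)
      qed
      moreover have "hol (trace (B ** W))" using HB HW by (intro hol_trace Hm_mult)
      ultimately show ?thesis by (simp add: hol_add)
    qed
    have HH: "hol ((K ** B - B ** K)$1$1)" "hol ((K ** B - B ** K)$1$2)" "hol ((K ** B - B ** K)$2$1)"
      using HW1 unfolding Hm_iff by auto
    have P1: "hol (b * K$2$1 - c * K$1$2)"
    proof -
      have "b * K$2$1 - c * K$1$2 = - ((K ** B - B ** K)$1$1)"
        by (simp add: matrix_matrix_mult_def sum_2 B11 B12 B21 B22 algebra_simps)
      then show ?thesis using hol_uminus[OF HH(1)] by simp
    qed
    have P2: "hol (a * K$1$2 + a * K$1$2 + b * K$2$2 - b * K$1$1)"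
    proof -
      have "a * K$1$2 + a * K$1$2 + b * K$2$2 - b * K$1$1 = - ((K ** B - B ** K)$1$2)"
        by (simp add: matrix_matrix_mult_def sum_2 B11 B12 B21 B22 algebra_simps)
      then show ?thesis using hol_uminus[OF HH(2)] by simp
    qed
    have P3: "hol (c * K$1$1 - c * K$2$2 - a * K$2$1 - a * K$2$1)"
    proof -
      have "c * K$1$1 - c * K$2$2 - a * K$2$1 - a * K$2$1 = - ((K ** B - B ** K)$2$1)"
        by (simp add: matrix_matrix_mult_def sum_2 B11 B12 B21 B22 algebra_simps)
      then show ?thesis using hol_uminus[OF HH(3)] by simp
    qed
    have T1': "hol (fls_deriv (K$1$1) + fls_deriv (K$2$2))"
    proof -
      have "fls_deriv (K$1$1) + fls_deriv (K$2$2) = trace (dm K)"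
        by (simp add: trace_def sum_2 dm_def mat_map_def)
      then show ?thesis using T1 by simp
    qed
    have T2': "hol (a * fls_deriv (K$1$1) + b * fls_deriv (K$2$1) + c * fls_deriv (K$1$2) - a * fls_deriv (K$2$2))"
    proof -
      have "a * fls_deriv (K$1$1) + b * fls_deriv (K$2$1) + c * fls_deriv (K$1$2) - a * fls_deriv (K$2$2)
          = trace (B ** dm K) - \<tau> * trace (dm K)"
        by (simp add: trace_def sum_2 dm_def mat_map_def matrix_matrix_mult_def B11 B12 B21 B22 algebra_simps)
      then show ?thesis using T1 T2 ht by (simp add: hol_diff hol_mult)
    qed
    have "hol (K$1$1) \<and> hol (K$1$2) \<and> hol (K$2$1) \<and> hol (K$2$2)"
      by (rule key[OF ha hb hc de se P1 P2 P3 T1' T2'])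
    then have "Hm K" unfolding Hm_iff .
    then show ?case using Suc.IH le_Suc_eq K_def by auto
  qed
  then show ?thesis by simp
qed




lemma minv: "invertible A \<Longrightarrow> A ** matrix_inv A = mat 1 \<and> matrix_inv A ** A = mat 1"
  unfolding invertible_def matrix_inv_def by (rule someI_ex)

definition cf :: "nat \<Rightarrow> ('a::zero) fps^2^2 \<Rightarrow> 'a^2^2" where
  "cf n P = mat_map (\<lambda>f. f $ n) P"

lemma cf_mult:
  fixes P Q :: "('a::comm_ring_1) fps^2^2"
  shows "cf n (P ** Q) = (\<Sum>i\<le>n. cf i P ** cf (n - i) Q)"
  by (simp add: vec_eq_iff forall_2 cf_def mat_map_def matrix_matrix_mult_def sum_2
      fps_mult_nth atLeast0AtMost sum.distrib)

lemma cf_add: "cf n (P + Q) = cf n P + cf n (Q :: ('a::comm_ring_1) fps^2^2)"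
  by (simp add: vec_eq_iff forall_2 cf_def mat_map_def)

lemma cf_incl: "cf n (mat_map incl A) = mat_map fps_to_fls (cf n A)"
  by (simp add: vec_eq_iff forall_2 cf_def mat_map_def incl_def)

lemma cf_X: "cf n (mat_map (\<lambda>x. fps_X * x) P) = (if n = 0 then 0 else cf (n - 1) (P :: ('a::comm_ring_1) fps^2^2))"
  by (simp add: vec_eq_iff forall_2 cf_def mat_map_def)

lemma cf_ddz: "cf n (mat_map ddz P) = dm (cf n P)"
  by (simp add: vec_eq_iff forall_2 cf_def mat_map_def ddz_def dm_def)

lemma mm_scal:
  fixes P Q :: "'a::comm_ring_1^2^2"
  shows "P ** mat_map (\<lambda>x. c * x) Q = mat_map (\<lambda>x. c * x) (P ** Q)"
  by (simp add: vec_eq_iff forall_2 mat_map_def matrix_matrix_mult_def sum_2 algebra_simps)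

lemma hom_mult: "mat_map fps_to_fls (P ** Q) = mat_map fps_to_fls P ** mat_map fps_to_fls (Q :: complex fps^2^2)"
  by (simp add: vec_eq_iff forall_2 mat_map_def matrix_matrix_mult_def sum_2 fls_times_fps_to_fls)

lemma hom_one: "mat_map fps_to_fls (mat 1 :: complex fps^2^2) = mat 1"
  by (simp add: vec_eq_iff forall_2 mat_map_def mat_def)

lemma Hm_hom: "Hm (mat_map fps_to_fls P)"
  by (simp add: Hm_def mat_map_def)

lemma mul_sum_left:
  fixes P :: "'a::comm_ring_1^2^2"
  shows "P ** (\<Sum>i\<in>S. f i) = (\<Sum>i\<in>S. P ** f i)"
proof (induction S rule: infinite_finite_induct)
  case (infinite A) then show ?case by (simp add: vec_eq_iff forall_2 matrix_matrix_mult_def)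
next
  case empty then show ?case by (simp add: vec_eq_iff forall_2 matrix_matrix_mult_def)
next
  case (insert x F) then show ?case by (simp add: matrix_add_ldistrib)
qed

lemma dm_mult: "dm (P ** Q) = dm P ** Q + P ** dm Q"
  by (simp add: vec_eq_iff forall_2 dm_def mat_map_def matrix_matrix_mult_def sum_2 algebra_simps)

lemma dm_add: "dm (P + Q) = dm P + dm Q"
  by (simp add: vec_eq_iff forall_2 dm_def mat_map_def)




lemma inv2:
  fixes S :: "'a::comm_ring_1^2^2"
  assumes "det S * u = 1"
  shows "invertible S"
proof -
  define T where "T = (\<chi> i j. u * (if i = 1 then (if j = 1 then S$2$2 else - S$1$2)
                                  else (if j = 1 then - S$2$1 else S$1$1)) :: 'a^2^2)"
  have d: "(S$1$1 * S$2$2 - S$1$2 * S$2$1) * u = 1" using assms by (simp add: det_2)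
  have "S ** T = mat 1"
    using d by (simp add: vec_eq_iff forall_2 T_def matrix_matrix_mult_def sum_2 mat_def algebra_simps)
  moreover have "T ** S = mat 1"
    using d by (simp add: vec_eq_iff forall_2 T_def matrix_matrix_mult_def sum_2 mat_def algebra_simps)
  ultimately show ?thesis unfolding invertible_def by blast
qed

theorem lemma4p3:
  fixes t d :: "complex fps"
    and A :: "complex fps fps^2^2"
    and R :: "complex fls fps^2^2"
  assumes simple_zero: "subdegree (t^2 - 4 * d) = 1"
    and trA: "trace (mat_map at_lambda0 A) = t"
    and detA: "det (mat_map at_lambda0 A) = d"
    and R_inv: "invertible R"
    and R0: "\<exists>R0 :: complex fps^2^2. invertible R0 \<and> mat_map fps_to_fls R0 = mat_map at_lambda0 R"
    and gauge_hol: "\<exists>G :: complex fps fps^2^2. gauge A R = mat_map incl G"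
  shows "\<exists>S :: complex fps fps^2^2. invertible S \<and> R = mat_map incl S"
proof -
  obtain G where hG: "gauge A R = mat_map incl G" using gauge_hol by blast
  obtain M0 where iM0: "invertible M0" and hM0: "mat_map fps_to_fls M0 = mat_map at_lambda0 R"
    using R0 by blast
  define Ri where "Ri = matrix_inv R"
  have RRi: "R ** Ri = mat 1" using minv[OF R_inv] by (simp add: Ri_def)
  define AL where "AL = mat_map incl A"
  define R' where "R' = mat_map ddz R"
  have EQ: "R ** mat_map incl G = AL ** R + mat_map (\<lambda>x. fps_X * x) R'"
  proof -
    have "R ** mat_map incl G = R ** (Ri ** AL ** R + mat_map (\<lambda>x. fps_X * x) (Ri ** R'))"
      using hG[symmetric] by (simp add: gauge_def AL_def R'_def Ri_def)
    also have "\<dots> = (R ** Ri) ** AL ** R + mat_map (\<lambda>x. fps_X * x) ((R ** Ri) ** R')"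
      by (simp add: matrix_add_ldistrib matrix_mul_assoc mm_scal)
    also have "\<dots> = AL ** R + mat_map (\<lambda>x. fps_X * x) R'"
      by (simp add: RRi)
    finally show ?thesis .
  qed
  define Rn where "Rn n = cf n R" for n
  define Gn where "Gn n = mat_map fps_to_fls (cf n G)" for n
  define An where "An n = mat_map fps_to_fls (cf n A)" for n
  have En: "(\<Sum>i\<le>n. Rn i ** Gn (n - i)) = (\<Sum>i\<le>n. An i ** Rn (n - i))
      + (if n = 0 then 0 else dm (Rn (n - 1)))" for n
  proof -
    have "cf n (R ** mat_map incl G) = cf n (AL ** R + mat_map (\<lambda>x. fps_X * x) R')"
      using EQ by simp
    then show ?thesis
      by (simp only: cf_mult cf_add cf_incl cf_X cf_ddz Rn_def Gn_def An_def AL_def R'_def)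
  qed
  define N0 where "N0 = matrix_inv M0"
  have MN0: "M0 ** N0 = mat 1" "N0 ** M0 = mat 1" using minv[OF iM0] by (simp_all add: N0_def)
  define M where "M = mat_map fps_to_fls M0"
  define N where "N = mat_map fps_to_fls N0"
  have MN: "M ** N = mat 1" "N ** M = mat 1"
    unfolding M_def N_def hom_mult[symmetric] MN0 hom_one by simp_all
  have at0: "at_lambda0 = (\<lambda>f. f $ 0)" by (rule ext) (simp add: at_lambda0_def)
  have RM: "Rn 0 = M"
    using hM0 by (simp add: Rn_def M_def cf_def at0)
  define X where "X n = N ** Rn n" for n
  have XR: "Rn n = M ** X n" for n
    by (simp add: X_def matrix_mul_assoc MN)
  define Ah where "Ah n = N ** An n ** M" for n
  define C where "C = N ** dm M"
  define B where "B = Gn 0"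
  have HMh: "Hm M" "Hm N" by (simp_all add: M_def N_def Hm_hom)
  have HG: "Hm (Gn n)" for n by (simp add: Gn_def Hm_hom)
  have HA: "Hm (Ah n)" for n unfolding Ah_def using HMh
    by (intro Hm_mult) (simp_all add: An_def Hm_hom)
  have HC: "Hm C" unfolding C_def using HMh by (intro Hm_mult Hm_dm)
  have X0: "X 0 = mat 1" by (simp add: X_def RM MN)
  have A0: "Ah 0 = B"
  proof -
    have "Rn 0 ** Gn 0 = An 0 ** Rn 0" using En[of 0] by simp
    then have "M ** B = An 0 ** M" by (simp add: RM B_def)
    then have "N ** (M ** B) = N ** An 0 ** M" by (simp add: matrix_mul_assoc)
    then show ?thesis by (simp add: Ah_def matrix_mul_assoc MN)
  qed
  have F: "(\<Sum>i\<le>n. X i ** Gn (n - i)) = (\<Sum>i\<le>n. Ah i ** X (n - i))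
               + (if n = 0 then 0 else C ** X (n - 1) + dm (X (n - 1)))" for n
  proof -
    have "(\<Sum>i\<le>n. X i ** Gn (n - i)) = N ** (\<Sum>i\<le>n. Rn i ** Gn (n - i))"
      by (simp add: mul_sum_left X_def matrix_mul_assoc)
    also have "\<dots> = N ** (\<Sum>i\<le>n. An i ** Rn (n - i)) + N ** (if n = 0 then 0 else dm (Rn (n - 1)))"
      by (simp only: En matrix_add_ldistrib)
    also have "N ** (\<Sum>i\<le>n. An i ** Rn (n - i)) = (\<Sum>i\<le>n. Ah i ** X (n - i))"
      by (simp add: mul_sum_left XR Ah_def matrix_mul_assoc)
    also have "N ** (if n = 0 then 0 else dm (Rn (n - 1))) = (if n = 0 then 0 else C ** X (n - 1) + dm (X (n - 1)))"
    proof (cases "n = 0")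
      case True then show ?thesis by (simp add: vec_eq_iff forall_2 matrix_matrix_mult_def)
    next
      case False
      have "N ** dm (Rn (n - 1)) = N ** (dm M ** X (n - 1) + M ** dm (X (n - 1)))"
        by (simp add: XR dm_mult)
      also have "\<dots> = C ** X (n - 1) + dm (X (n - 1))"
        by (simp add: matrix_add_ldistrib matrix_mul_assoc MN C_def)
      finally show ?thesis using False by simp
    qed
    finally show ?thesis .
  qed
  define A0' where "A0' = mat_map at_lambda0 A"
  define B0 where "B0 = N0 ** A0' ** M0"
  have BB0: "B = mat_map fps_to_fls B0"
  proof -
    have "An 0 = mat_map fps_to_fls A0'" by (simp add: An_def A0'_def cf_def at0)
    then show ?thesis using A0[symmetric] by (simp add: Ah_def B0_def hom_mult M_def N_def)
  qed
  have trB0: "trace B0 = t"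
  proof -
    have "trace B0 = trace (M0 ** (N0 ** A0'))" unfolding B0_def by (rule trace_mul_sym)
    also have "\<dots> = trace A0'" by (simp add: matrix_mul_assoc MN0)
    finally show ?thesis using trA by (simp add: A0'_def)
  qed
  have detB0: "det B0 = d"
  proof -
    have "det B0 = det A0' * (det M0 * det N0)" by (simp add: B0_def det_mul algebra_simps)
    also have "det M0 * det N0 = 1" using MN0(1) det_mul[of M0 N0] by simp
    finally show ?thesis using detA by (simp add: A0'_def)
  qed
  have Bent: "B$i$j = fps_to_fls (B0$i$j)" for i j by (simp add: BB0 mat_map_def)
  have hT: "fps_to_fls t = B$1$1 + B$2$2"
    using trB0 by (simp add: Bent trace_def sum_2 flip: fps_to_fls_plus)
  have hD: "fps_to_fls d = B$1$1 * B$2$2 - B$1$2 * B$2$1"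
  proof -
    have "fps_to_fls d = fps_to_fls (B0$1$1 * B0$2$2 - B0$1$2 * B0$2$1)" using detB0 by (simp add: det_2)
    then show ?thesis by (simp add: Bent fls_times_fps_to_fls)
  qed
  define h :: "complex fls" where "h = fls_const (1/2)"
  have hh: "h + h = 1" by (simp add: h_def fls_plus_const)
  have hq: "h * h = fls_const (1/4)" by (simp add: h_def)
  define \<tau> where "\<tau> = h * fps_to_fls t"
  define a where "a = B$1$1 - \<tau>"
  define b where "b = B$1$2"
  define c where "c = B$2$1"
  define e where "e = fps_const (1/4 :: complex) * (t^2 - 4 * d)"
  have B11: "B$1$1 = \<tau> + a" by (simp add: a_def)
  have B22: "B$2$2 = \<tau> - a"
    unfolding a_def \<tau>_def hT using hh by algebra
  have ht: "hol \<tau>" unfolding \<tau>_def h_def by (intro hol_mult) (simp_all add: hol_def)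
  have ha: "hol a" unfolding a_def using ht by (simp add: Bent hol_diff)
  have hb: "hol b" "hol c" by (simp_all add: b_def c_def Bent)
  have fe: "fps_to_fls e = (h * h) * ((B$1$1 + B$2$2)^2 - 4 * (B$1$1 * B$2$2 - B$1$2 * B$2$1))"
    unfolding hq e_def by (simp add: fls_times_fps_to_fls fps_to_fls_power hT[symmetric] hD[symmetric])
  have de: "a * a + b * c = fps_to_fls e"
    unfolding fe a_def b_def c_def \<tau>_def hT using hh by algebra
  have se: "subdegree e = 1"
  proof -
    have nz: "t^2 - 4 * d \<noteq> 0" using simple_zero by auto
    show ?thesis unfolding e_def using nz simple_zero by simp
  qed
  have HX: "Hm (X n)" for n
    by (rule core[OF X0 HG HA HC B_def[symmetric] A0 B11 b_def[symmetric] c_def[symmetric] B22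
          ha hb(1) hb(2) ht de se F])
  have HR: "hol (R$i$j $ n)" for i j n
  proof -
    have "Hm (Rn n)" unfolding XR using HMh HX by (intro Hm_mult)
    then show ?thesis by (simp add: Hm_def Rn_def cf_def mat_map_def)
  qed
  define S where "S = (\<chi> i j. Abs_fps (\<lambda>n. fls_regpart (R$i$j $ n)))"
  have RS: "R = mat_map incl S"
    by (simp add: vec_eq_iff S_def mat_map_def incl_def fps_eq_iff hol_regpart[OF HR])
  have S0: "cf 0 S = M0"
  proof -
    have r0: "R$i$j $ 0 = fps_to_fls (M0$i$j)" for i j
      using hM0 by (simp add: vec_eq_iff mat_map_def at0)
    show ?thesis by (simp add: vec_eq_iff cf_def S_def mat_map_def r0)
  qed
  have dS0: "det S $ 0 = det M0"
    using S0 by (simp add: det_2 cf_def mat_map_def vec_eq_iff forall_2 fps_mult_nth)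
  have "det M0 * det N0 = 1" using MN0(1) det_mul[of M0 N0] by simp
  then have "det S $ 0 * det N0 = 1" using dS0 by simp
  then have "det S * fps_right_inverse (det S) (det N0) = 1" by (rule fps_right_inverse)
  then have "invertible S" by (rule inv2)
  then show ?thesis using RS by blast
qed



end
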